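(* Let $G$ be finite and $z\in\mathbb C\setminus\{0\}$. The pairing $\langle\cdot,\cdot\rangle$ restricted to $\{f\in D_\infty:\mathcal Tf=zf\}\times\{\mu\in\mathrm{FA}(P):\mathcal T'\mu=z\mu\}$ is non-degenerate if and only if $\ker(S-z)=\ker(S-z)^k$ for all $k\ge1$, i.e. the eigenspace of $S$ for $z$ coincides with the generalized eigenspace of $S$ for $z$.
   Context: $G$ is a finite connected graph (no loops, no multiple edges, every vertex of degree $\ge2$); $E$ oriented edges, $\iota,\tau$, opposite $\bar e$; turn $e\rightsquigarrow e'$ iff $\tau(e)=\iota(e')$, $e'\ne\bar e$. $P$ = infinite paths $(e_1,e_2,\dots)$ with $e_i\rightsquigarrow e_{i+1}$; $(\mathcal Tf)(e_1,\dots)=\sum_{e_0\rightsquigarrow e_1}f(e_0,e_1,\dots)$. $S$ is the operator on $\mathrm{Map}(E)$ (all functions $E\to\mathbb C$), $(Sg)(e)=\sum_{e'\rightsquigarrow e}g(e')$. $D_m$ = functions on $P$ depending only on $e_1,\dots,e_m$, $D_\infty=\bigcup D_m$. Postal codes: finite paths $c=(c_1,\dots,c_m)$, $m\ge1$, with $c_i\rightsquigarrow c_{i+1}$; $\mathcal C_m$, $\mathcal C$; $\mathbf 1_c$ indicator of the paths beginning with $c$. $\mathrm{FA}(P)=\{\mu:\mathcal C\to\mathbb C:\mu(c)=\sum_{e:c_m\rightsquigarrow e}\mu(c,e)\ \forall c\}$. Pairing $\langle f,\mu\rangle=\sum_{c\in\mathcal C_m}f(c)\mu(c)$ for $f\in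 D_m$ ($f(c)$ the value of $f$ on paths beginning with $c$). $(\mathcal T'\mu)(c)=\langle\mathcal T\mathbf 1_c,\mu\rangle$. *)

theory Defs
  imports Complex_Main
begin

text \<open>A graph is given by a vertex set V and a symmetric irreflexive adjacency
relation adj. Oriented edges are pairs (u,v) with adj u v; iota = fst, tau = snd,
the opposite edge of (u,v) is (v,u).\<close>

definition oedges :: "('v \<Rightarrow> 'v \<Rightarrow> bool) \<Rightarrow> ('v \<times> 'v) set" where
  "oedges adj = {(u, v). adj u v}"

definition turn :: "('v \<Rightarrow> 'v \<Rightarrow> bool) \<Rightarrow> 'v \<times> 'v \<Rightarrow> 'v \<times> 'v \<Rightarrow> bool" where
  "turn adj e e' \<longleftrightarrow> e \<in> oedges adj \<and> e' \<in> oedges adj \<and> snd e = fst e' \<and> e' \<noteq> (snd e, fst e)"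

definition paths :: "('v \<Rightarrow> 'v \<Rightarrow> bool) \<Rightarrow> (nat \<Rightarrow> 'v \<times> 'v) set" where
  "paths adj = {p. \<forall>i. turn adj (p i) (p (Suc i))}"

definition postal :: "('v \<Rightarrow> 'v \<Rightarrow> bool) \<Rightarrow> ('v \<times> 'v) list set" where
  "postal adj = {c. c \<noteq> [] \<and> (\<forall>i<length c. c ! i \<in> oedges adj)
      \<and> (\<forall>i. Suc i < length c \<longrightarrow> turn adj (c ! i) (c ! Suc i))}"

definition postal_m :: "('v \<Rightarrow> 'v \<Rightarrow> bool) \<Rightarrow> nat \<Rightarrow> ('v \<times> 'v) list set" where
  "postal_m adj m = {c \<in> postal adj. length c = m}"

definition Tops :: "('v \<Rightarrow> 'v \<Rightarrow> bool) \<Rightarrow> ((nat \<Rightarrow> 'v \<times> 'v) \<Rightarrow> complex) \<Rightarrow> (nat \<Rightarrow> 'v \<times> 'v) \<Rightarrow> complex" where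
  "Tops adj f p = (\<Sum>e0 \<in> {e0. turn adj e0 (p 0)}. f (case_nat e0 p))"

definition Dm :: "('v \<Rightarrow> 'v \<Rightarrow> bool) \<Rightarrow> nat \<Rightarrow> ((nat \<Rightarrow> 'v \<times> 'v) \<Rightarrow> complex) \<Rightarrow> bool" where
  "Dm adj m f \<longleftrightarrow> (\<forall>p\<in>paths adj. \<forall>q\<in>paths adj. (\<forall>i<m. p i = q i) \<longrightarrow> f p = f q)"

definition Dinf :: "('v \<Rightarrow> 'v \<Rightarrow> bool) \<Rightarrow> ((nat \<Rightarrow> 'v \<times> 'v) \<Rightarrow> complex) \<Rightarrow> bool" where
  "Dinf adj f \<longleftrightarrow> (\<exists>m\<ge>1. Dm adj m f)"

definition extend :: "('v \<Rightarrow> 'v \<Rightarrow> bool) \<Rightarrow> ('v \<times> 'v) list \<Rightarrow> nat \<Rightarrow> 'v \<times> 'v" where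
  "extend adj c = (SOME p. p \<in> paths adj \<and> (\<forall>i<length c. p i = c ! i))"

definition valc :: "('v \<Rightarrow> 'v \<Rightarrow> bool) \<Rightarrow> ((nat \<Rightarrow> 'v \<times> 'v) \<Rightarrow> complex) \<Rightarrow> ('v \<times> 'v) list \<Rightarrow> complex" where
  "valc adj f c = f (extend adj c)"

definition indic :: "('v \<times> 'v) list \<Rightarrow> (nat \<Rightarrow> 'v \<times> 'v) \<Rightarrow> complex" where
  "indic c p = (if (\<forall>i<length c. p i = c ! i) then 1 else 0)"

definition FA :: "('v \<Rightarrow> 'v \<Rightarrow> bool) \<Rightarrow> (('v \<times> 'v) list \<Rightarrow> complex) set" where
  "FA adj = {\<mu>. \<forall>c\<in>postal adj. \<mu> c = (\<Sum>e\<in>{e. turn adj (last c) e}. \<mu> (c @ [e]))}"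

definition pairing_at :: "('v \<Rightarrow> 'v \<Rightarrow> bool) \<Rightarrow> nat \<Rightarrow> ((nat \<Rightarrow> 'v \<times> 'v) \<Rightarrow> complex) \<Rightarrow> (('v \<times> 'v) list \<Rightarrow> complex) \<Rightarrow> complex" where
  "pairing_at adj m f \<mu> = (\<Sum>c\<in>postal_m adj m. valc adj f c * \<mu> c)"

text \<open>The pairing for f in D_infinity, computed at the least m \<ge> 1 with f in D_m
(independent of the choice of m by finite additivity).\<close>
definition pairing :: "('v \<Rightarrow> 'v \<Rightarrow> bool) \<Rightarrow> ((nat \<Rightarrow> 'v \<times> 'v) \<Rightarrow> complex) \<Rightarrow> (('v \<times> 'v) list \<Rightarrow> complex) \<Rightarrow> complex" where
  "pairing adj f \<mu> = pairing_at adj (LEAST m. m \<ge> 1 \<and> Dm adj m f) f \<mu>"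

definition Tdual :: "('v \<Rightarrow> 'v \<Rightarrow> bool) \<Rightarrow> (('v \<times> 'v) list \<Rightarrow> complex) \<Rightarrow> ('v \<times> 'v) list \<Rightarrow> complex" where
  "Tdual adj \<mu> c = pairing adj (Tops adj (indic c)) \<mu>"

definition eigenD :: "('v \<Rightarrow> 'v \<Rightarrow> bool) \<Rightarrow> complex \<Rightarrow> ((nat \<Rightarrow> 'v \<times> 'v) \<Rightarrow> complex) set" where
  "eigenD adj z = {f. Dinf adj f \<and> (\<forall>p\<in>paths adj. Tops adj f p = z * f p)}"

definition eigenFA :: "('v \<Rightarrow> 'v \<Rightarrow> bool) \<Rightarrow> complex \<Rightarrow> (('v \<times> 'v) list \<Rightarrow> complex) set" where
  "eigenFA adj z = {\<mu> \<in> FA adj. \<forall>c\<in>postal adj. Tdual adj \<mu> c = z * \<mu> c}"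

text \<open>Non-degeneracy of the pairing on eigenD z \<times> eigenFA z (functions on P are
identified when equal on P, measures when equal on postal codes).\<close>
definition pairing_nondegenerate :: "('v \<Rightarrow> 'v \<Rightarrow> bool) \<Rightarrow> complex \<Rightarrow> bool" where
  "pairing_nondegenerate adj z \<longleftrightarrow>
     (\<forall>f\<in>eigenD adj z. (\<forall>\<mu>\<in>eigenFA adj z. pairing adj f \<mu> = 0) \<longrightarrow> (\<forall>p\<in>paths adj. f p = 0)) \<and>
     (\<forall>\<mu>\<in>eigenFA adj z. (\<forall>f\<in>eigenD adj z. pairing adj f \<mu> = 0) \<longrightarrow> (\<forall>c\<in>postal adj. \<mu> c = 0))"

definition Sop :: "('v \<Rightarrow> 'v \<Rightarrow> bool) \<Rightarrow> ('v \<times> 'v \<Rightarrow> complex) \<Rightarrow> 'v \<times> 'v \<Rightarrow> complex" where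
  "Sop adj g e = (if e \<in> oedges adj then (\<Sum>e'\<in>{e'. turn adj e' e}. g e') else 0)"

definition Sminus :: "('v \<Rightarrow> 'v \<Rightarrow> bool) \<Rightarrow> complex \<Rightarrow> ('v \<times> 'v \<Rightarrow> complex) \<Rightarrow> 'v \<times> 'v \<Rightarrow> complex" where
  "Sminus adj z g e = (if e \<in> oedges adj then Sop adj g e - z * g e else 0)"

text \<open>ker (S - z)^k, as a set of functions E \<rightarrow> C (extended by 0 outside E).\<close>
definition kerpow :: "('v \<Rightarrow> 'v \<Rightarrow> bool) \<Rightarrow> complex \<Rightarrow> nat \<Rightarrow> ('v \<times> 'v \<Rightarrow> complex) set" where
  "kerpow adj z k = {g. (\<forall>e. e \<notin> oedges adj \<longrightarrow> g e = 0) \<and> ((Sminus adj z ^^ k) g = (\<lambda>_. 0))}"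

end

theory Submission
  imports Defs "HOL-Library.Function_Algebras"
begin


definition fscale :: "complex \<Rightarrow> ('e \<Rightarrow> complex) \<Rightarrow> ('e \<Rightarrow> complex)" where
  "fscale c f = (\<lambda>x. c * f x)"

lemma vs_fscale: "vector_space fscale"
  by unfold_locales (auto simp: fscale_def fun_eq_iff algebra_simps)

lemma inj_surj_aux:
  fixes A :: "('e \<Rightarrow> complex) \<Rightarrow> 'e \<Rightarrow> complex"
  assumes hom: "module_hom fscale fscale A"
    and U: "module.subspace fscale U" and D: "finite D" and UD: "U \<subseteq> module.span fscale D"
    and AU: "A ` U \<subseteq> U" and inj: "inj_on A U"
  shows "U \<subseteq> A ` U"
proof -
  interpret vs: vector_space fscale by (rule vs_fscale)
  interpret lh: module_hom fscale fscale A by (rule hom)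
  obtain B where B: "B \<subseteq> U" "vs.independent B" "U \<subseteq> vs.span B"
    using vs.maximal_independent_subset[of U] by blast
  have spB: "vs.span B \<subseteq> U" using B(1) U vs.span_minimal by blast
  have fB: "finite B" using vs.independent_span_bound[OF D B(2)] B(1) UD by blast
  have iAB: "vs.independent (A ` B)"
    using lh.independent_injective_image[OF B(2)] inj_on_subset[OF inj spB] by blast
  have cAB: "card (A ` B) = card B" using card_image inj_on_subset[OF inj] B(1) by blast
  have "U \<subseteq> vs.span (A ` B)"
  proof
    fix u assume u: "u \<in> U"
    show "u \<in> vs.span (A ` B)"
    proof (rule ccontr)
      assume nu: "u \<notin> vs.span (A ` B)"
      have i2: "vs.independent (insert u (A ` B))" using vs.independent_insertI[OF nu iAB] .
      have "insert u (A ` B) \<subseteq> vs.span B" using u B AU by (meson dual_order.trans image_mono insert_subset)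
      then have "card (insert u (A ` B)) \<le> card B" using vs.independent_span_bound[OF fB i2] by blast
      moreover have "u \<notin> A ` B" using nu vs.span_base by blast
      ultimately show False using cAB fB by simp
    qed
  qed
  also have "\<dots> = A ` vs.span B" by (rule lh.span_image)
  also have "\<dots> \<subseteq> A ` U" using spB by blast
  finally show ?thesis .
qed

lemma fsum_apply: "(\<Sum>a\<in>S. f a) x = (\<Sum>a\<in>S. f a x)"
  by (induction S rule: infinite_finite_induct) auto

lemma decomp:
  fixes A :: "('e \<Rightarrow> complex) \<Rightarrow> 'e \<Rightarrow> complex" and E :: "'e set"
  assumes fin: "finite E"
    and supp: "\<And>g x. x \<notin> E \<Longrightarrow> A g x = 0"
    and add: "\<And>f g. A (f + g) = A f + A g"
    and smult: "\<And>c f. A (\<lambda>x. c * f x) = (\<lambda>x. c * A f x)"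
    and k2: "\<And>h. (\<forall>x. x \<notin> E \<longrightarrow> h x = 0) \<Longrightarrow> A (A h) = 0 \<Longrightarrow> A h = 0"
    and h: "\<forall>x. x \<notin> E \<longrightarrow> h x = 0"
  shows "\<exists>w. (\<forall>x. x \<notin> E \<longrightarrow> w x = 0) \<and> A (h - A w) = 0"
proof -
  interpret vs: vector_space fscale by (rule vs_fscale)
  have hom: "module_hom fscale fscale A"
    unfolding module_hom_iff using vs.module_axioms add smult by (auto simp: fscale_def)
  interpret lh: module_hom fscale fscale A by (rule hom)
  define W where "W = {f. \<forall>x. x \<notin> E \<longrightarrow> f x = (0::complex)}"
  define D where "D = (\<lambda>e. (\<lambda>x. if x = e then (1::complex) else 0)) ` E"
  have Wsub: "vs.subspace W" unfolding vs.subspace_def W_def by (auto simp: fscale_def)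
  have WD: "W \<subseteq> vs.span D"
  proof
    fix f assume f: "f \<in> W"
    have "f = (\<Sum>e\<in>E. fscale (f e) (\<lambda>x. if x = e then 1 else 0))"
    proof
      fix x show "f x = (\<Sum>e\<in>E. fscale (f e) (\<lambda>x. if x = e then 1 else 0)) x"
        using f fin by (auto simp: W_def fscale_def fsum_apply if_distrib cong: if_cong)
    qed
    also have "\<dots> \<in> vs.span D"
      by (intro vs.span_sum vs.span_scale vs.span_base) (auto simp: D_def)
    finally show "f \<in> vs.span D" .
  qed
  define U where "U = A ` W"
  have Usub: "vs.subspace U" unfolding U_def by (rule lh.subspace_image[OF Wsub])
  have AW: "A ` W \<subseteq> W" using supp by (auto simp: W_def)
  have UW: "U \<subseteq> W" using AW U_def by blast
  have AU: "A ` U \<subseteq> U" using AW U_def by blast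
  have "\<forall>x\<in>U. A x = 0 \<longrightarrow> x = 0" using k2 by (auto simp: U_def W_def)
  then have inj: "inj_on A U" using lh.inj_on_iff_eq_0[OF Usub] by blast
  have "U \<subseteq> A ` U"
    by (rule inj_surj_aux[OF hom Usub _ _ AU inj, of D]) (use UW WD D_def fin in auto)
  moreover have "A h \<in> U" using h U_def W_def by blast
  ultimately obtain u where u: "u \<in> U" "A h = A u" by blast
  then obtain w where w: "w \<in> W" "u = A w" unfolding U_def by blast
  have "A (h - A w) = 0" using u w lh.diff by simp
  then show ?thesis using w W_def by blast
qed




locale NB =
  fixes adj :: "'v \<Rightarrow> 'v \<Rightarrow> bool" and z :: complex
  assumes finE: "finite (oedges adj)"
    and succ: "\<And>e. e \<in> oedges adj \<Longrightarrow> \<exists>e'. turn adj e e'"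
    and znz: "z \<noteq> 0"
begin

abbreviation "E \<equiv> oedges adj"

lemma turnE: "turn adj e e' \<Longrightarrow> e \<in> E \<and> e' \<in> E"
  by (simp add: turn_def)

lemma fin_out: "finite {e'. turn adj e e'}"
  by (rule finite_subset[OF _ finE]) (auto dest: turnE)

lemma fin_in: "finite {e'. turn adj e' e}"
  by (rule finite_subset[OF _ finE]) (auto dest: turnE)

definition nxt where "nxt e = (SOME e'. turn adj e e')"

lemma nxt: "e \<in> E \<Longrightarrow> turn adj e (nxt e)"
  unfolding nxt_def using succ by (metis someI_ex)

definition ray where "ray e i = (nxt ^^ i) e"

lemma ray_E: "e \<in> E \<Longrightarrow> ray e i \<in> E"
  by (induction i) (auto simp: ray_def dest: nxt turnE)

lemma ray_path: "e \<in> E \<Longrightarrow> ray e \<in> paths adj"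
  unfolding paths_def using ray_E nxt by (auto simp: ray_def)

lemma ray0[simp]: "ray e 0 = e" by (simp add: ray_def)

lemma postal_Cons2: "((a # b # r) \<in> postal adj) \<longleftrightarrow> turn adj a b \<and> ((b # r) \<in> postal adj)"
proof
  assume p: "((a # b # r) \<in> postal adj)"
  have t: "\<forall>i. Suc i < length (a#b#r) \<longrightarrow> turn adj ((a#b#r) ! i) ((a#b#r) ! Suc i)"
    and el: "\<forall>i<length (a#b#r). (a#b#r) ! i \<in> E" using p unfolding postal_def mem_Collect_eq by blast+
  have "turn adj a b" using t[rule_format, of 0] by simp
  moreover have "((b # r) \<in> postal adj)" unfolding postal_def mem_Collect_eq
  proof (intro conjI allI impI)
    fix i assume "i < length (b#r)"
    then show "(b#r) ! i \<in> E" using el[rule_format, of "Suc i"] by simp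
  next
    fix i assume "Suc i < length (b#r)"
    then show "turn adj ((b#r) ! i) ((b#r) ! Suc i)" using t[rule_format, of "Suc i"] by simp
  qed simp
  ultimately show "turn adj a b \<and> ((b # r) \<in> postal adj)" by simp
next
  assume h: "turn adj a b \<and> ((b # r) \<in> postal adj)"
  have t: "\<forall>i. Suc i < length (b#r) \<longrightarrow> turn adj ((b#r) ! i) ((b#r) ! Suc i)"
    and el: "\<forall>i<length (b#r). (b#r) ! i \<in> E" using h unfolding postal_def mem_Collect_eq by blast+
  show "((a # b # r) \<in> postal adj)" unfolding postal_def mem_Collect_eq
  proof (intro conjI allI impI)
    fix i assume i: "i < length (a # b # r)"
    show "(a # b # r) ! i \<in> E"
    proof (cases i)
      case 0 then show ?thesis using h turnE[of a b] by simp
    next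
      case (Suc j) then show ?thesis using el i by simp
    qed
  next
    fix i assume i: "Suc i < length (a # b # r)"
    show "turn adj ((a # b # r) ! i) ((a # b # r) ! Suc i)"
    proof (cases i)
      case 0 then show ?thesis using h by simp
    next
      case (Suc j) then show ?thesis using t i by simp
    qed
  qed simp
qed

lemma postal_single: "([e] \<in> postal adj) \<longleftrightarrow> e \<in> E"
  unfolding postal_def mem_Collect_eq by auto

lemma postal_E: "(c \<in> postal adj) \<Longrightarrow> x \<in> set c \<Longrightarrow> x \<in> E"
  unfolding postal_def mem_Collect_eq by (metis in_set_conv_nth)

lemma postal_snoc: "(c \<in> postal adj) \<Longrightarrow> ((c @ [e]) \<in> postal adj) \<longleftrightarrow> turn adj (last c) e"
proof
  assume c: "(c \<in> postal adj)" and ce: "((c @ [e]) \<in> postal adj)"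
  have "c \<noteq> []" using c postal_def by auto
  then have "Suc (length c - 1) < length (c @ [e])" by simp
  with ce have "turn adj ((c@[e]) ! (length c - 1)) ((c@[e]) ! Suc (length c - 1))"
    unfolding postal_def mem_Collect_eq by blast
  moreover have "(c@[e]) ! (length c - 1) = last c" using \<open>c \<noteq> []\<close> by (simp add: nth_append last_conv_nth)
  moreover have "(c@[e]) ! Suc (length c - 1) = e" using \<open>c \<noteq> []\<close> by (simp add: nth_append)
  ultimately show "turn adj (last c) e" by simp
next
  assume c: "(c \<in> postal adj)" and t: "turn adj (last c) e"
  have ne: "c \<noteq> []" using c postal_def by auto
  show "((c @ [e]) \<in> postal adj)" unfolding postal_def mem_Collect_eq
  proof (intro conjI allI impI)
    fix i assume "i < length (c @ [e])"
    then show "(c @ [e]) ! i \<in> E" using c t turnE[of "last c" e] unfolding postal_def mem_Collect_eq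
      by (auto simp: nth_append less_Suc_eq)
  next
    fix i assume i: "Suc i < length (c @ [e])"
    show "turn adj ((c @ [e]) ! i) ((c @ [e]) ! Suc i)"
    proof (cases "Suc i < length c")
      case True then show ?thesis using c unfolding postal_def mem_Collect_eq by (auto simp: nth_append)
    next
      case False
      then have "Suc i = length c" using i by simp
      then have "i = length c - 1" by simp
      then show ?thesis using t ne by (simp add: nth_append last_conv_nth)
    qed
  qed simp
qed

definition pext where
  "pext c i = (if i < length c then c ! i else ray (last c) (Suc i - length c))"

lemma pext_agree: "i < length c \<Longrightarrow> pext c i = c ! i"
  by (simp add: pext_def)

lemma pext_ge: assumes "c \<noteq> []" "i \<ge> length c - 1" shows "pext c i = ray (last c) (Suc i - length c)"
proof (cases "i < length c")
  case True
  then have "i = length c - 1" using assms by simp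
  then show ?thesis using assms True by (simp add: pext_def last_conv_nth)
qed (simp add: pext_def)

lemma pext_path: assumes c: "(c \<in> postal adj)" shows "pext c \<in> paths adj"
  unfolding paths_def
proof (intro CollectI allI)
  fix i
  have ne: "c \<noteq> []" using c postal_def by auto
  have lE: "last c \<in> E" using c ne postal_E by auto
  show "turn adj (pext c i) (pext c (Suc i))"
  proof (cases "Suc i < length c")
    case True
    then have "pext c i = c ! i" "pext c (Suc i) = c ! Suc i" by (simp_all add: pext_agree)
    then show ?thesis using c True unfolding postal_def mem_Collect_eq by simp
  next
    case False
    then have "pext c i = ray (last c) (Suc i - length c)"
         "pext c (Suc i) = ray (last c) (Suc (Suc i - length c))"
      using pext_ge[OF ne] by (auto simp: Suc_diff_le)
    then show ?thesis using ray_path[OF lE] unfolding paths_def by auto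
  qed
qed

lemma extend: assumes "(c \<in> postal adj)"
  shows "extend adj c \<in> paths adj \<and> (\<forall>i<length c. extend adj c i = c ! i)"
proof -
  have "\<exists>p. p \<in> paths adj \<and> (\<forall>i<length c. p i = c ! i)"
    using pext_path[OF assms] pext_agree by blast
  then show ?thesis unfolding extend_def by (rule someI_ex)
qed

lemma extend_single: "e \<in> E \<Longrightarrow> extend adj [e] \<in> paths adj \<and> extend adj [e] 0 = e"
  using extend[of "[e]"] postal_single by auto

lemma path_E: "p \<in> paths adj \<Longrightarrow> p i \<in> E"
  unfolding paths_def using turnE by blast

lemma path_Cons: "p \<in> paths adj \<Longrightarrow> turn adj e0 (p 0) \<Longrightarrow> case_nat e0 p \<in> paths adj"
  unfolding paths_def by (auto split: nat.split)

lemma Dm_mono: "Dm adj m f \<Longrightarrow> m \<le> m' \<Longrightarrow> Dm adj m' f"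
  unfolding Dm_def by (meson less_le_trans)

lemma Tops_Dm: assumes "Dm adj (Suc m) f" "m \<ge> 1" shows "Dm adj m (Tops adj f)"
  unfolding Dm_def
proof (intro ballI impI)
  fix p q assume p: "p \<in> paths adj" and q: "q \<in> paths adj" and a: "\<forall>i<m. p i = q i"
  have 0: "p 0 = q 0" using a assms(2) by simp
  show "Tops adj f p = Tops adj f q" unfolding Tops_def 0
  proof (rule sum.cong[OF refl])
    fix e0 assume "e0 \<in> {e0. turn adj e0 (q 0)}"
    then have t: "turn adj e0 (q 0)" by simp
    have "case_nat e0 p \<in> paths adj" using path_Cons[OF p] t 0 by simp
    moreover have "case_nat e0 q \<in> paths adj" using path_Cons[OF q t] .
    moreover have "\<forall>i<Suc m. case_nat e0 p i = case_nat e0 q i"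
      using a by (auto split: nat.split)
    ultimately show "f (case_nat e0 p) = f (case_nat e0 q)" using assms(1) unfolding Dm_def by blast
  qed
qed

lemma eigen_D1: assumes f: "f \<in> eigenD adj z" shows "Dm adj 1 f"
proof -
  obtain m where m: "m \<ge> 1" "Dm adj m f" using f unfolding eigenD_def Dinf_def by blast
  have eig: "\<forall>p\<in>paths adj. f p = Tops adj f p / z"
  proof
    fix p assume "p \<in> paths adj"
    then have "Tops adj f p = z * f p" using f unfolding eigenD_def by blast
    then show "f p = Tops adj f p / z" using znz by simp
  qed
  have "Dm adj (k + 1) f \<Longrightarrow> Dm adj 1 f" for k
  proof (induction k)
    case (Suc k)
    have "Dm adj (k+1) (Tops adj f)" using Tops_Dm[of "k+1" f] Suc.prems by simp
    have "Dm adj (k+1) f" unfolding Dm_def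
    proof (intro ballI impI)
      fix p q assume pq: "p \<in> paths adj" "q \<in> paths adj" "\<forall>i<k+1. p i = q i"
      have "Tops adj f p = Tops adj f q" using \<open>Dm adj (k+1) (Tops adj f)\<close> pq unfolding Dm_def by blast
      then show "f p = f q" using eig pq by simp
    qed
    then show ?case using Suc.IH by blast
  qed simp
  moreover have "m = (m - 1) + 1" using m by simp
  ultimately show ?thesis using m by metis
qed

lemma D1_val: assumes d: "Dm adj 1 f" and p: "p \<in> paths adj" shows "f p = f (extend adj [p 0])"
proof -
  have "p 0 \<in> E" using path_E p by blast
  then have e: "extend adj [p 0] \<in> paths adj" "extend adj [p 0] 0 = p 0" using extend_single by blast+
  have "\<forall>i<1. p i = extend adj [p 0] i" using e by simp
  then show ?thesis using d p e(1) unfolding Dm_def by blast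
qed

end




context NB begin

lemma fin_postal_m: "finite (postal_m adj m)"
proof (rule finite_subset)
  show "postal_m adj m \<subseteq> {xs. set xs \<subseteq> E \<and> length xs = m}"
    unfolding postal_m_def using postal_E by blast
  show "finite {xs. set xs \<subseteq> E \<and> length xs = m}" using finite_lists_length_eq[OF finE] .
qed

lemma postal_butlast: assumes "(c @ [e]) \<in> postal adj" "c \<noteq> []" shows "c \<in> postal adj"
proof -
  have t: "\<forall>i. Suc i < length (c@[e]) \<longrightarrow> turn adj ((c@[e]) ! i) ((c@[e]) ! Suc i)"
    and el: "\<forall>i<length (c@[e]). (c@[e]) ! i \<in> E" using assms(1) unfolding postal_def mem_Collect_eq by blast+
  show ?thesis unfolding postal_def mem_Collect_eq
  proof (intro conjI allI impI)
    fix i assume i: "i < length c"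
    then show "c ! i \<in> E" using el[rule_format, of i] by (simp add: nth_append)
  next
    fix i assume i: "Suc i < length c"
    then show "turn adj (c ! i) (c ! Suc i)" using t[rule_format, of i] by (simp add: nth_append)
  qed (rule assms(2))
qed

lemma postal_m_Suc: assumes "m \<ge> 1"
  shows "postal_m adj (Suc m) = (\<lambda>(c,e). c @ [e]) ` (SIGMA c:postal_m adj m. {e. turn adj (last c) e})"
proof
  show "postal_m adj (Suc m) \<subseteq> (\<lambda>(c,e). c @ [e]) ` (SIGMA c:postal_m adj m. {e. turn adj (last c) e})"
  proof
    fix d assume d: "d \<in> postal_m adj (Suc m)"
    then have dp: "d \<in> postal adj" "length d = Suc m" unfolding postal_m_def by auto
    then have ne: "d \<noteq> []" by auto
    have dd: "d = butlast d @ [last d]" using ne by simp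
    have bne: "butlast d \<noteq> []" using dp assms by (cases d) auto
    have bp: "butlast d \<in> postal adj" using postal_butlast[of "butlast d" "last d"] dd dp bne by simp
    have "turn adj (last (butlast d)) (last d)" using postal_snoc[OF bp, of "last d"] dd dp by simp
    moreover have "butlast d \<in> postal_m adj m" using bp dp unfolding postal_m_def by simp
    ultimately show "d \<in> (\<lambda>(c,e). c @ [e]) ` (SIGMA c:postal_m adj m. {e. turn adj (last c) e})"
      using dd by (intro image_eqI[of _ _ "(butlast d, last d)"]) auto
  qed
next
  show "(\<lambda>(c,e). c @ [e]) ` (SIGMA c:postal_m adj m. {e. turn adj (last c) e}) \<subseteq> postal_m adj (Suc m)"
    unfolding postal_m_def using postal_snoc by auto
qed

lemma valc_snoc: assumes "Dm adj (length c) f" "c \<in> postal adj" "(c @ [e]) \<in> postal adj"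
  shows "valc adj f (c @ [e]) = valc adj f c"
proof -
  have a: "extend adj c \<in> paths adj" "\<forall>i<length c. extend adj c i = c ! i" using extend assms(2) by blast+
  have b: "extend adj (c@[e]) \<in> paths adj" "\<forall>i<length (c@[e]). extend adj (c@[e]) i = (c@[e]) ! i"
    using extend assms(3) by blast+
  have "\<forall>i<length c. extend adj (c@[e]) i = extend adj c i" using a b by (simp add: nth_append)
  then show ?thesis unfolding valc_def using assms(1) a(1) b(1) unfolding Dm_def by blast
qed

lemma pairing_at_Suc: assumes mu: "\<mu> \<in> FA adj" and m: "m \<ge> 1" and D: "Dm adj m f"
  shows "pairing_at adj (Suc m) f \<mu> = pairing_at adj m f \<mu>"
proof -
  have inj: "inj_on (\<lambda>(c,e). c @ [e]) X" for X :: "(('v \<times> 'v) list \<times> ('v \<times> 'v)) set"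
    by (auto simp: inj_on_def)
  have "pairing_at adj (Suc m) f \<mu> =
      (\<Sum>ce\<in>(SIGMA c:postal_m adj m. {e. turn adj (last c) e}). valc adj f ((\<lambda>(c,e). c @ [e]) ce) * \<mu> ((\<lambda>(c,e). c @ [e]) ce))"
    unfolding pairing_at_def postal_m_Suc[OF m]
    using sum.reindex[OF inj, of "\<lambda>d. valc adj f d * \<mu> d"] by (simp add: o_def)
  also have "\<dots> = (\<Sum>c\<in>postal_m adj m. \<Sum>e\<in>{e. turn adj (last c) e}. valc adj f (c @ [e]) * \<mu> (c @ [e]))"
    by (subst sum.Sigma[OF fin_postal_m]) (simp_all add: fin_out case_prod_unfold)
  also have "\<dots> = (\<Sum>c\<in>postal_m adj m. valc adj f c * \<mu> c)"
  proof (rule sum.cong[OF refl])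
    fix c assume c: "c \<in> postal_m adj m"
    then have cp: "c \<in> postal adj" "length c = m" unfolding postal_m_def by auto
    have "(\<Sum>e\<in>{e. turn adj (last c) e}. valc adj f (c @ [e]) * \<mu> (c @ [e]))
        = (\<Sum>e\<in>{e. turn adj (last c) e}. valc adj f c * \<mu> (c @ [e]))"
    proof (rule sum.cong[OF refl])
      fix e assume "e \<in> {e. turn adj (last c) e}"
      then have "(c @ [e]) \<in> postal adj" using postal_snoc[OF cp(1)] by simp
      then show "valc adj f (c @ [e]) * \<mu> (c @ [e]) = valc adj f c * \<mu> (c @ [e])"
        using valc_snoc[of c f e] cp D by simp
    qed
    also have "\<dots> = valc adj f c * \<mu> c"
      using mu cp(1) unfolding FA_def by (simp add: sum_distrib_left)
    finally show "(\<Sum>e\<in>{e. turn adj (last c) e}. valc adj f (c @ [e]) * \<mu> (c @ [e])) = valc adj f c * \<mu> c" .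
  qed
  finally show ?thesis unfolding pairing_at_def .
qed

lemma pairing_at_add: assumes "\<mu> \<in> FA adj" "m \<ge> 1" "Dm adj m f"
  shows "pairing_at adj (m + k) f \<mu> = pairing_at adj m f \<mu>"
proof (induction k)
  case (Suc k)
  have "Dm adj (m + k) f" using Dm_mono assms(3) by simp
  then show ?case using pairing_at_Suc[OF assms(1), of "m+k" f] assms(2) Suc by simp
qed simp

lemma pairing_eq: assumes "\<mu> \<in> FA adj" "m \<ge> 1" "Dm adj m f"
  shows "pairing adj f \<mu> = pairing_at adj m f \<mu>"
proof -
  define m0 where "m0 = (LEAST m. m \<ge> 1 \<and> Dm adj m f)"
  have m0: "m0 \<ge> 1 \<and> Dm adj m0 f" unfolding m0_def by (rule LeastI[of _ m]) (use assms in simp)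
  have "m0 \<le> m" unfolding m0_def by (rule Least_le) (use assms in simp)
  then have "m = m0 + (m - m0)" by simp
  then have "pairing_at adj m f \<mu> = pairing_at adj m0 f \<mu>"
    using pairing_at_add[OF assms(1), of m0 f "m - m0"] m0 by simp
  then show ?thesis unfolding pairing_def m0_def[symmetric] by simp
qed

lemma postal_m_1: "postal_m adj 1 = (\<lambda>e. [e]) ` E"
proof
  show "postal_m adj 1 \<subseteq> (\<lambda>e. [e]) ` E"
  proof
    fix c assume c: "c \<in> postal_m adj 1"
    then have "c \<in> postal adj" "length c = 1" unfolding postal_m_def by auto
    then obtain e where "c = [e]" by (metis One_nat_def length_0_conv length_Suc_conv)
    then show "c \<in> (\<lambda>e. [e]) ` E" using \<open>c \<in> postal adj\<close> postal_single by auto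
  qed
  show "(\<lambda>e. [e]) ` E \<subseteq> postal_m adj 1" unfolding postal_m_def using postal_single by auto
qed

lemma pairing_at_1: "pairing_at adj 1 f \<mu> = (\<Sum>e\<in>E. f (extend adj [e]) * \<mu> [e])"
  unfolding pairing_at_def postal_m_1 valc_def by (subst sum.reindex) (auto simp: inj_on_def)

lemma pairing_D1: "\<mu> \<in> FA adj \<Longrightarrow> Dm adj 1 f \<Longrightarrow> pairing adj f \<mu> = (\<Sum>e\<in>E. f (extend adj [e]) * \<mu> [e])"
  using pairing_eq[of \<mu> 1 f] pairing_at_1 by simp

lemma Dm_indic: "Dm adj (length d) (indic d)"
  unfolding Dm_def indic_def by simp

lemma valc_indic: assumes "c \<in> postal adj" "length c = length d"
  shows "valc adj (indic d) c = (if c = d then 1 else 0)"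
proof -
  have a: "\<forall>i<length c. extend adj c i = c ! i" using extend assms(1) by blast
  have "(\<forall>i<length d. extend adj c i = d ! i) \<longleftrightarrow> c = d"
    using a assms(2) by (auto simp: list_eq_iff_nth_eq)
  then show ?thesis unfolding valc_def indic_def by simp
qed

lemma pairing_indic: assumes mu: "\<mu> \<in> FA adj" and d: "d \<in> postal adj"
  shows "pairing adj (indic d) \<mu> = \<mu> d"
proof -
  have l: "length d \<ge> 1" using d unfolding postal_def by (cases d) auto
  have "pairing adj (indic d) \<mu> = pairing_at adj (length d) (indic d) \<mu>"
    using pairing_eq[OF mu l Dm_indic] .
  also have "\<dots> = (\<Sum>c\<in>postal_m adj (length d). (if c = d then 1 else 0) * \<mu> c)"
    unfolding pairing_at_def by (rule sum.cong[OF refl]) (simp add: valc_indic postal_m_def)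
  also have "\<dots> = (\<Sum>c\<in>postal_m adj (length d). if c = d then \<mu> c else 0)"
    by (rule sum.cong[OF refl]) simp
  also have "\<dots> = \<mu> d" using d fin_postal_m[of "length d"] by (simp add: sum.delta' postal_m_def)
  finally show ?thesis .
qed

lemma all_Suc: "(\<forall>i<Suc n. P i) = (P 0 \<and> (\<forall>i<n. P (Suc i)))"
  by (auto simp: less_Suc_eq_0_disj)

lemma Tops_indic2: assumes t: "turn adj a b" shows "Tops adj (indic (a # b # r)) = indic (b # r)"
proof
  fix p
  have ind: "indic (a # b # r) (case_nat e0 p) = (if e0 = a then indic (b # r) p else 0)" for e0
    unfolding indic_def length_Cons all_Suc by simp
  have "Tops adj (indic (a # b # r)) p = (if a \<in> {e0. turn adj e0 (p 0)} then indic (b # r) p else 0)"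
    unfolding Tops_def ind using fin_in by (simp add: sum.delta')
  also have "\<dots> = indic (b # r) p"
  proof (cases "turn adj a (p 0)")
    case False
    then have "p 0 \<noteq> b" using t by auto
    then have "indic (b # r) p = 0" unfolding indic_def by (metis length_Cons nth_Cons_0 zero_less_Suc)
    then show ?thesis by simp
  qed simp
  finally show "Tops adj (indic (a # b # r)) p = indic (b # r) p" .
qed

lemma Tops_indic1: "Tops adj (indic [e]) = (\<lambda>p. if turn adj e (p 0) then 1 else 0)"
proof
  fix p
  have ind: "indic [e] (case_nat e0 p) = (if e0 = e then 1 else 0)" for e0
    unfolding indic_def by simp
  show "Tops adj (indic [e]) p = (if turn adj e (p 0) then 1 else 0)"
    unfolding Tops_def ind using fin_in by (simp add: sum.delta')
qed

lemma Tdual_long: assumes mu: "\<mu> \<in> FA adj" and c: "(a # b # r) \<in> postal adj"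
  shows "Tdual adj \<mu> (a # b # r) = \<mu> (b # r)"
  using c unfolding Tdual_def postal_Cons2 using Tops_indic2 pairing_indic[OF mu] by simp

lemma Tdual_single: assumes mu: "\<mu> \<in> FA adj" and e: "e \<in> E"
  shows "Tdual adj \<mu> [e] = (\<Sum>e'\<in>{e'. turn adj e e'}. \<mu> [e'])"
proof -
  have D: "Dm adj 1 (\<lambda>p. if turn adj e (p 0) then 1 else 0)" unfolding Dm_def by simp
  have "Tdual adj \<mu> [e] = (\<Sum>e'\<in>E. (if turn adj e (extend adj [e'] 0) then 1 else 0) * \<mu> [e'])"
    unfolding Tdual_def Tops_indic1 using pairing_D1[OF mu D] by simp
  also have "\<dots> = (\<Sum>e'\<in>E. if turn adj e e' then \<mu> [e'] else 0)"
    by (rule sum.cong[OF refl]) (simp add: extend_single)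
  also have "\<dots> = (\<Sum>e'\<in>{e'\<in>E. turn adj e e'}. \<mu> [e'])"
    using finE by (simp add: sum.inter_filter)
  also have "{e'\<in>E. turn adj e e'} = {e'. turn adj e e'}" using turnE by blast
  finally show ?thesis .
qed

end




context NB begin

abbreviation "A \<equiv> Sminus adj z"

definition AT :: "('v \<times> 'v \<Rightarrow> complex) \<Rightarrow> 'v \<times> 'v \<Rightarrow> complex" where
  "AT \<nu> e = (if e \<in> E then (\<Sum>e'\<in>{e'. turn adj e e'}. \<nu> e') - z * \<nu> e else 0)"

definition dot :: "('v \<times> 'v \<Rightarrow> complex) \<Rightarrow> ('v \<times> 'v \<Rightarrow> complex) \<Rightarrow> complex" where
  "dot g \<nu> = (\<Sum>e\<in>E. g e * \<nu> e)"

definition supp :: "('v \<times> 'v \<Rightarrow> complex) \<Rightarrow> bool" where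
  "supp g \<longleftrightarrow> (\<forall>x. x \<notin> E \<longrightarrow> g x = 0)"

definition delta :: "'v \<times> 'v \<Rightarrow> 'v \<times> 'v \<Rightarrow> complex" where
  "delta e0 = (\<lambda>x. if x = e0 then 1 else 0)"

lemma if_mult0: "(if P then a else 0) * b = (if P then a * b else (0::complex))" by simp
lemma mult_if0: "b * (if P then a else 0) = (if P then b * a else (0::complex))" by simp

lemma A_supp: "x \<notin> E \<Longrightarrow> A g x = 0" by (simp add: Sminus_def)
lemma AT_supp: "x \<notin> E \<Longrightarrow> AT g x = 0" by (simp add: AT_def)

lemma A_add: "A (f + g) = A f + A g"
  by (auto simp: fun_eq_iff Sminus_def Sop_def sum.distrib algebra_simps)
lemma A_smult: "A (\<lambda>x. c * f x) = (\<lambda>x. c * A f x)"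
  by (auto simp: fun_eq_iff Sminus_def Sop_def sum_distrib_left algebra_simps)
lemma AT_add: "AT (f + g) = AT f + AT g"
  by (auto simp: fun_eq_iff AT_def sum.distrib algebra_simps)
lemma AT_smult: "AT (\<lambda>x. c * f x) = (\<lambda>x. c * AT f x)"
  by (auto simp: fun_eq_iff AT_def sum_distrib_left algebra_simps)

lemma A_diff: "A (f - g) = A f - A g"
  by (auto simp: fun_eq_iff Sminus_def Sop_def sum_subtractf algebra_simps)
lemma AT_diff: "AT (f - g) = AT f - AT g"
  by (auto simp: fun_eq_iff AT_def sum_subtractf algebra_simps)
lemma A_0: "A 0 = 0"
  by (auto simp: fun_eq_iff Sminus_def Sop_def)

lemma supp_A: "supp (A g)" unfolding supp_def by (simp add: A_supp)
lemma supp_AT: "supp (AT g)" unfolding supp_def by (simp add: AT_supp)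
lemma supp_diff: "supp f \<Longrightarrow> supp g \<Longrightarrow> supp (f - g)" unfolding supp_def by simp
lemma supp_delta: "e0 \<in> E \<Longrightarrow> supp (delta e0)" unfolding supp_def delta_def by auto

lemma dot_diff: "dot (f - g) \<nu> = dot f \<nu> - dot g \<nu>"
  unfolding dot_def by (simp add: sum_subtractf algebra_simps)
lemma dot_diff2: "dot g (f - h) = dot g f - dot g h"
  unfolding dot_def by (simp add: sum_subtractf algebra_simps)
lemma dot_0: "dot g 0 = 0" unfolding dot_def by simp
lemma dot_delta: "e0 \<in> E \<Longrightarrow> dot (delta e0) \<nu> = \<nu> e0"
  unfolding dot_def delta_def using finE by (simp add: if_mult0 sum.delta)
lemma dot_delta2: "e0 \<in> E \<Longrightarrow> dot g (delta e0) = g e0"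
  unfolding dot_def delta_def using finE by (simp add: mult_if0 sum.delta)

lemma sum_in: "(\<Sum>e'\<in>{e'. turn adj e' e}. g e') = (\<Sum>e'\<in>E. if turn adj e' e then g e' else 0)"
proof -
  have "{e'\<in>E. turn adj e' e} = {e'. turn adj e' e}" using turnE by blast
  then show ?thesis using sum.inter_filter[OF finE, of g "\<lambda>e'. turn adj e' e"] by simp
qed

lemma sum_out: "(\<Sum>e'\<in>{e'. turn adj e e'}. g e') = (\<Sum>e'\<in>E. if turn adj e e' then g e' else 0)"
proof -
  have "{e'\<in>E. turn adj e e'} = {e'. turn adj e e'}" using turnE by blast
  then show ?thesis using sum.inter_filter[OF finE, of g "\<lambda>e'. turn adj e e'"] by simp
qed

lemma adjoint: "dot (A g) \<nu> = dot g (AT \<nu>)"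
proof -
  have "dot (A g) \<nu> = (\<Sum>e\<in>E. (\<Sum>e'\<in>E. if turn adj e' e then g e' else 0) * \<nu> e) - z * (\<Sum>e\<in>E. g e * \<nu> e)"
    unfolding dot_def Sminus_def Sop_def sum_in
    by (simp add: sum_subtractf sum_distrib_left algebra_simps)
  also have "(\<Sum>e\<in>E. (\<Sum>e'\<in>E. if turn adj e' e then g e' else 0) * \<nu> e)
      = (\<Sum>e\<in>E. \<Sum>e'\<in>E. if turn adj e' e then g e' * \<nu> e else 0)"
    by (simp add: sum_distrib_right if_mult0)
  also have "\<dots> = (\<Sum>e'\<in>E. \<Sum>e\<in>E. if turn adj e' e then g e' * \<nu> e else 0)"
    by (rule sum.swap)
  also have "\<dots> = (\<Sum>e'\<in>E. g e' * (\<Sum>e\<in>E. if turn adj e' e then \<nu> e else 0))"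
    by (simp add: sum_distrib_left mult_if0)
  finally show ?thesis
    unfolding dot_def AT_def sum_out by (simp add: sum_subtractf sum_distrib_left algebra_simps)
qed

lemma supp_eq0: assumes "supp g" "\<forall>e\<in>E. g e = 0" shows "g = 0"
  using assms unfolding supp_def by (auto simp: fun_eq_iff)

lemma dot_eq0: assumes "supp g" "\<forall>h. supp h \<longrightarrow> dot h g = 0" shows "g = 0"
proof (rule supp_eq0[OF assms(1)], intro ballI)
  fix e assume e: "e \<in> E"
  show "g e = 0" using assms(2)[rule_format, OF supp_delta[OF e]] dot_delta[OF e] by simp
qed

lemma dot_restrict: "dot h g = dot (\<lambda>x. if x \<in> E then h x else 0) g"
  unfolding dot_def by simp

lemma supp_restrict: "supp (\<lambda>x. if x \<in> E then h x else 0)"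
  unfolding supp_def by simp

definition gof :: "((nat \<Rightarrow> 'v \<times> 'v) \<Rightarrow> complex) \<Rightarrow> 'v \<times> 'v \<Rightarrow> complex" where
  "gof f e = (if e \<in> E then f (extend adj [e]) else 0)"

lemma gof_val: assumes "f \<in> eigenD adj z" "p \<in> paths adj" shows "f p = gof f (p 0)"
  using D1_val[OF eigen_D1[OF assms(1)] assms(2)] path_E[OF assms(2)] by (simp add: gof_def)

lemma supp_gof: "supp (gof f)" unfolding supp_def gof_def by simp

lemma gof_ker: assumes f: "f \<in> eigenD adj z" shows "A (gof f) = 0"
proof
  fix e show "A (gof f) e = 0 e"
  proof (cases "e \<in> E")
    case True
    define p where "p = extend adj [e]"
    have p: "p \<in> paths adj" "p 0 = e" using extend_single[OF True] p_def by auto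
    have "Tops adj f p = (\<Sum>e0\<in>{e0. turn adj e0 e}. gof f e0)"
      unfolding Tops_def p(2)[symmetric]
    proof (rule sum.cong[OF refl])
      fix e0 assume "e0 \<in> {e0. turn adj e0 (p 0)}"
      then have "case_nat e0 p \<in> paths adj" using path_Cons p(1) by blast
      then show "f (case_nat e0 p) = gof f e0" using gof_val[OF f] by simp
    qed
    moreover have "Tops adj f p = z * f p" using f p unfolding eigenD_def by blast
    moreover have "f p = gof f e" using gof_val[OF f p(1)] p(2) by simp
    ultimately show ?thesis using True by (simp add: Sminus_def Sop_def)
  qed (simp add: Sminus_def)
qed

lemma ker_eigen: assumes "supp g" "A g = 0" shows "(\<lambda>p. g (p 0)) \<in> eigenD adj z"
  unfolding eigenD_def Dinf_def
proof (intro CollectI conjI ballI)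
  show "\<exists>m\<ge>1. Dm adj m (\<lambda>p. g (p 0))" by (rule exI[of _ 1]) (simp add: Dm_def)
next
  fix p assume p: "p \<in> paths adj"
  have e: "p 0 \<in> E" using path_E p by blast
  have "A g (p 0) = 0" using assms(2) by simp
  then show "Tops adj (\<lambda>p. g (p 0)) p = z * g (p 0)"
    using e unfolding Tops_def Sminus_def Sop_def by simp
qed

definition nu_of :: "(('v \<times> 'v) list \<Rightarrow> complex) \<Rightarrow> 'v \<times> 'v \<Rightarrow> complex" where
  "nu_of \<mu> e = (if e \<in> E then \<mu> [e] else 0)"

definition mu_of :: "('v \<times> 'v \<Rightarrow> complex) \<Rightarrow> ('v \<times> 'v) list \<Rightarrow> complex" where
  "mu_of \<nu> c = \<nu> (last c) / z ^ (length c - 1)"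

lemma supp_nu: "supp (nu_of \<mu>)" unfolding supp_def nu_of_def by simp

lemma eigenFA_long: assumes mu: "\<mu> \<in> eigenFA adj z" and c: "(a # b # r) \<in> postal adj"
  shows "\<mu> (a # b # r) = \<mu> (b # r) / z"
proof -
  have "Tdual adj \<mu> (a # b # r) = z * \<mu> (a # b # r)" using mu c unfolding eigenFA_def by blast
  moreover have "Tdual adj \<mu> (a # b # r) = \<mu> (b # r)" using Tdual_long mu c unfolding eigenFA_def by blast
  ultimately show ?thesis using znz by (simp add: field_simps)
qed

lemma eigenFA_formula: assumes mu: "\<mu> \<in> eigenFA adj z"
  shows "(a # c) \<in> postal adj \<Longrightarrow> \<mu> (a # c) = \<mu> [last (a # c)] / z ^ length c"
proof (induction c arbitrary: a)
  case (Cons b r)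
  have "(b # r) \<in> postal adj" using Cons.prems postal_Cons2 by blast
  then show ?case using eigenFA_long[OF mu Cons.prems] Cons.IH by simp
qed simp

lemma eigenFA_mu_of: assumes mu: "\<mu> \<in> eigenFA adj z" and c: "c \<in> postal adj"
  shows "\<mu> c = mu_of (nu_of \<mu>) c"
proof -
  obtain a r where ar: "c = a # r" using c unfolding postal_def by (cases c) auto
  have "last c \<in> E" using postal_E[OF c] ar by simp
  then show ?thesis using eigenFA_formula[OF mu, of a r] c ar by (simp add: mu_of_def nu_of_def)
qed

lemma eigenFA_AT: assumes mu: "\<mu> \<in> eigenFA adj z" shows "AT (nu_of \<mu>) = 0"
proof
  fix e show "AT (nu_of \<mu>) e = 0 e"
  proof (cases "e \<in> E")
    case True
    have FA: "\<mu> \<in> FA adj" using mu unfolding eigenFA_def by blast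
    have "Tdual adj \<mu> [e] = z * \<mu> [e]" using mu True postal_single unfolding eigenFA_def by blast
    then have "(\<Sum>e'\<in>{e'. turn adj e e'}. \<mu> [e']) = z * \<mu> [e]" using Tdual_single[OF FA True] by simp
    moreover have "(\<Sum>e'\<in>{e'. turn adj e e'}. nu_of \<mu> e') = (\<Sum>e'\<in>{e'. turn adj e e'}. \<mu> [e'])"
      by (rule sum.cong) (auto simp: nu_of_def dest: turnE)
    ultimately show ?thesis using True by (simp add: AT_def nu_of_def)
  qed (simp add: AT_def)
qed

lemma mu_of_eigen: assumes AT0: "AT \<nu> = 0" shows "mu_of \<nu> \<in> eigenFA adj z"
proof -
  have rel: "(\<Sum>e'\<in>{e'. turn adj e e'}. \<nu> e') = z * \<nu> e" if "e \<in> E" for e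
  proof -
    have "AT \<nu> e = 0" using AT0 by simp
    then show ?thesis using that by (simp add: AT_def)
  qed
  have FA: "mu_of \<nu> \<in> FA adj" unfolding FA_def
  proof (intro CollectI ballI)
    fix c assume c: "c \<in> postal adj"
    have ne: "c \<noteq> []" using c unfolding postal_def by auto
    have l: "last c \<in> E" using postal_E[OF c] ne by simp
    have "(\<Sum>e\<in>{e. turn adj (last c) e}. mu_of \<nu> (c @ [e])) = (\<Sum>e\<in>{e. turn adj (last c) e}. \<nu> e / z ^ length c)"
      by (simp add: mu_of_def)
    also have "\<dots> = (\<Sum>e\<in>{e. turn adj (last c) e}. \<nu> e) / z ^ length c"
      by (simp add: sum_divide_distrib)
    also have "\<dots> = z * \<nu> (last c) / z ^ length c" using rel[OF l] by simp
    also have "\<dots> = \<nu> (last c) / z ^ (length c - 1)"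
      using ne znz by (cases "length c") (auto simp: field_simps)
    finally show "mu_of \<nu> c = (\<Sum>e\<in>{e. turn adj (last c) e}. mu_of \<nu> (c @ [e]))"
      by (simp add: mu_of_def)
  qed
  show ?thesis unfolding eigenFA_def
  proof (intro CollectI conjI ballI FA)
    fix c assume c: "c \<in> postal adj"
    obtain a r where ar: "c = a # r" using c unfolding postal_def by (cases c) auto
    show "Tdual adj (mu_of \<nu>) c = z * mu_of \<nu> c"
    proof (cases r)
      case Nil
      have a: "a \<in> E" using c ar Nil postal_single by simp
      show ?thesis using Tdual_single[OF FA a] rel[OF a] ar Nil by (simp add: mu_of_def)
    next
      case (Cons b r')
      have "Tdual adj (mu_of \<nu>) c = mu_of \<nu> (b # r')" using Tdual_long[OF FA] c ar Cons by simp
      then show ?thesis using ar Cons znz by (simp add: mu_of_def field_simps)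
    qed
  qed
qed

lemma pairing_eigen: assumes f: "f \<in> eigenD adj z" and mu: "\<mu> \<in> eigenFA adj z"
  shows "pairing adj f \<mu> = dot (gof f) (nu_of \<mu>)"
proof -
  have FA: "\<mu> \<in> FA adj" using mu unfolding eigenFA_def by blast
  show ?thesis unfolding pairing_D1[OF FA eigen_D1[OF f]] dot_def
    by (rule sum.cong) (auto simp: gof_def nu_of_def)
qed

lemma nu_mu_of: "e \<in> E \<Longrightarrow> nu_of (mu_of \<nu>) e = \<nu> e"
  by (simp add: nu_of_def mu_of_def)

lemma gof_ker_eigen: assumes "supp g" "A g = 0" "e \<in> E"
  shows "gof (\<lambda>p. g (p 0)) e = g e"
  using assms extend_single by (simp add: gof_def)

end




context NB begin

lemma A_0': "A (\<lambda>_. 0) = (\<lambda>_. 0)" using A_0 by (simp add: zero_fun_def)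

lemma funpow_A0: "(A ^^ k) 0 = 0"
  by (induction k) (simp_all add: A_0' zero_fun_def)

lemma kerpow_iff: "g \<in> kerpow adj z k \<longleftrightarrow> supp g \<and> (A ^^ k) g = 0"
  unfolding kerpow_def supp_def by (simp add: zero_fun_def)

lemma chain: assumes k21: "\<And>h. supp h \<Longrightarrow> A (A h) = 0 \<Longrightarrow> A h = 0" and k: "k \<ge> 1"
  shows "kerpow adj z 1 = kerpow adj z k"
proof -
  have fw: "supp h \<Longrightarrow> (A ^^ k) h = 0 \<Longrightarrow> A h = 0" if "k \<ge> 1" for h k
    using that
  proof (induction k arbitrary: h rule: dec_induct)
    case base then show ?case by simp
  next
    case (step j)
    have "(A ^^ j) (A h) = 0" using step.prems(2) by (simp add: funpow_Suc_right zero_fun_def del: funpow.simps)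
    then have "A (A h) = 0" using step.IH[of "A h"] supp_A by blast
    then show ?case using k21 step.prems(1) by blast
  qed
  have bw: "A h = 0 \<Longrightarrow> (A ^^ k) h = 0" if k1: "k \<ge> 1" for h k
  proof -
    obtain j where "k = Suc j" using k1 by (cases k) auto
    then show "A h = 0 \<Longrightarrow> (A ^^ k) h = 0" by (simp add: funpow_Suc_right funpow_A0 del: funpow.simps)
  qed
  show ?thesis unfolding set_eq_iff kerpow_iff using fw[OF k] bw[OF k] by auto
qed

theorem main_NB: "pairing_nondegenerate adj z \<longleftrightarrow> (\<forall>k\<ge>1. kerpow adj z 1 = kerpow adj z k)"
proof
  assume nd: "pairing_nondegenerate adj z"
  have k21: "A h = 0" if h: "supp h" "A (A h) = 0" for h
  proof -
    define g where "g = A h"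
    have sg: "supp g" using supp_A g_def by simp
    have Ag: "A g = 0" using h g_def by simp
    have f: "(\<lambda>p. g (p 0)) \<in> eigenD adj z" using ker_eigen[OF sg Ag] .
    have "\<forall>\<mu>\<in>eigenFA adj z. pairing adj (\<lambda>p. g (p 0)) \<mu> = 0"
    proof
      fix \<mu> assume mu: "\<mu> \<in> eigenFA adj z"
      have "pairing adj (\<lambda>p. g (p 0)) \<mu> = dot (gof (\<lambda>p. g (p 0))) (nu_of \<mu>)" using pairing_eigen[OF f mu] .
      also have "gof (\<lambda>p. g (p 0)) = g"
        using gof_ker_eigen[OF sg Ag] sg supp_gof unfolding supp_def by (metis ext)
      also have "dot g (nu_of \<mu>) = dot h (AT (nu_of \<mu>))" unfolding g_def by (rule adjoint)
      also have "\<dots> = 0" using eigenFA_AT[OF mu] dot_0 by simp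
      finally show "pairing adj (\<lambda>p. g (p 0)) \<mu> = 0" .
    qed
    then have z0: "\<forall>p\<in>paths adj. g (p 0) = 0" using nd f unfolding pairing_nondegenerate_def by blast
    have "\<forall>e\<in>E. g e = 0"
    proof
      fix e assume e: "e \<in> E"
      show "g e = 0" using z0 extend_single[OF e] by metis
    qed
    then show ?thesis using supp_eq0[OF sg] g_def by simp
  qed
  show "\<forall>k\<ge>1. kerpow adj z 1 = kerpow adj z k" using chain[OF k21] by blast
next
  assume r: "\<forall>k\<ge>1. kerpow adj z 1 = kerpow adj z k"
  have k21: "A h = 0" if h: "supp h" "A (A h) = 0" for h
  proof -
    have "h \<in> kerpow adj z 2" using h unfolding kerpow_iff by (simp add: numeral_2_eq_2)
    moreover have "kerpow adj z 1 = kerpow adj z 2" using r by simp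
    ultimately have "h \<in> kerpow adj z 1" by simp
    then show ?thesis unfolding kerpow_iff by simp
  qed
  have decA: "\<exists>w. supp w \<and> A (h - A w) = 0" if sh: "supp h" for h
  proof -
    have "\<exists>w. (\<forall>x. x \<notin> E \<longrightarrow> w x = 0) \<and> A (h - A w) = 0"
    proof (rule decomp[OF finE A_supp A_add A_smult])
      show "\<forall>x. x \<notin> E \<longrightarrow> h x = 0" using sh unfolding supp_def .
      show "A h = 0" if "\<forall>x. x \<notin> E \<longrightarrow> h x = 0" "A (A h) = 0" for h
        using k21[of h] that unfolding supp_def by blast
    qed
    then show ?thesis unfolding supp_def .
  qed
  have k21T: "AT \<nu> = 0" if nu: "supp \<nu>" "AT (AT \<nu>) = 0" for \<nu>
  proof (rule dot_eq0[OF supp_AT], intro allI impI)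
    fix h assume sh: "supp h"
    obtain w where w: "supp w" "A (h - A w) = 0" using decA[OF sh] by blast
    have Ah: "A h = A (A w)" using w(2) A_diff by simp
    have "dot h (AT \<nu>) = dot (A h) \<nu>" using adjoint by simp
    also have "\<dots> = dot (A (A w)) \<nu>" using Ah by simp
    also have "\<dots> = dot w (AT (AT \<nu>))" using adjoint by simp
    also have "\<dots> = 0" using nu(2) dot_0 by simp
    finally show "dot h (AT \<nu>) = 0" .
  qed
  have decAT: "\<exists>w. supp w \<and> AT (h - AT w) = 0" if sh: "supp h" for h
  proof -
    have "\<exists>w. (\<forall>x. x \<notin> E \<longrightarrow> w x = 0) \<and> AT (h - AT w) = 0"
    proof (rule decomp[OF finE AT_supp AT_add AT_smult])
      show "\<forall>x. x \<notin> E \<longrightarrow> h x = 0" using sh unfolding supp_def .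
      show "AT h = 0" if "\<forall>x. x \<notin> E \<longrightarrow> h x = 0" "AT (AT h) = 0" for h
        using k21T[of h] that unfolding supp_def by blast
    qed
    then show ?thesis unfolding supp_def .
  qed
  show "pairing_nondegenerate adj z" unfolding pairing_nondegenerate_def
  proof (intro conjI ballI impI)
    fix f p assume f: "f \<in> eigenD adj z" and pf: "\<forall>\<mu>\<in>eigenFA adj z. pairing adj f \<mu> = 0"
      and p: "p \<in> paths adj"
    define g where "g = gof f"
    have sg: "supp g" using supp_gof g_def by simp
    have Ag: "A g = 0" using gof_ker[OF f] g_def by simp
    have "\<forall>e\<in>E. g e = 0"
    proof (rule ballI, rule ccontr)
      fix e0 assume e0: "e0 \<in> E" and ne: "g e0 \<noteq> 0"
      obtain w where w: "supp w" "AT (delta e0 - AT w) = 0" using decAT[OF supp_delta[OF e0]] by blast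
      define \<nu> where "\<nu> = delta e0 - AT w"
      have mu: "mu_of \<nu> \<in> eigenFA adj z" using mu_of_eigen w(2) \<nu>_def by simp
      have "pairing adj f (mu_of \<nu>) = dot g (nu_of (mu_of \<nu>))" using pairing_eigen[OF f mu] g_def by simp
      also have "\<dots> = dot g \<nu>" unfolding dot_def by (rule sum.cong) (simp_all add: nu_mu_of)
      also have "\<dots> = dot g (delta e0) - dot g (AT w)" unfolding \<nu>_def by (rule dot_diff2)
      also have "dot g (AT w) = dot (A g) w" using adjoint by simp
      also have "\<dots> = 0" unfolding Ag dot_def by simp
      also have "dot g (delta e0) = g e0" using dot_delta2[OF e0] .
      finally have "pairing adj f (mu_of \<nu>) = g e0" by simp
      moreover have "pairing adj f (mu_of \<nu>) = 0" using pf mu by blast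
      ultimately show False using ne by simp
    qed
    moreover have "f p = g (p 0)" using gof_val[OF f p] g_def by simp
    moreover have "p 0 \<in> E" using path_E[OF p] .
    ultimately show "f p = 0" by simp
  next
    fix \<mu> c assume mu: "\<mu> \<in> eigenFA adj z" and pm: "\<forall>f\<in>eigenD adj z. pairing adj f \<mu> = 0"
      and c: "c \<in> postal adj"
    define \<nu> where "\<nu> = nu_of \<mu>"
    have ATn: "AT \<nu> = 0" using eigenFA_AT[OF mu] \<nu>_def by simp
    have "\<forall>e\<in>E. \<nu> e = 0"
    proof
      fix e0 assume e0: "e0 \<in> E"
      obtain w where w: "supp w" "A (delta e0 - A w) = 0" using decA[OF supp_delta[OF e0]] by blast
      define k where "k = delta e0 - A w"
      have sk: "supp k" using supp_diff[OF supp_delta[OF e0] supp_A] k_def by simp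
      have fk: "(\<lambda>p. k (p 0)) \<in> eigenD adj z" using ker_eigen[OF sk] w(2) k_def by simp
      have gk: "gof (\<lambda>p. k (p 0)) = k"
        using gof_ker_eigen[OF sk] w(2) k_def sk supp_gof unfolding supp_def by (metis ext)
      have "pairing adj (\<lambda>p. k (p 0)) \<mu> = 0" using pm fk by blast
      moreover have "pairing adj (\<lambda>p. k (p 0)) \<mu> = dot k \<nu>" using pairing_eigen[OF fk mu] gk \<nu>_def by simp
      ultimately have "dot k \<nu> = 0" by simp
      moreover have "dot (A w) \<nu> = 0" using adjoint ATn dot_0 by simp
      moreover have "dot k \<nu> = dot (delta e0) \<nu> - dot (A w) \<nu>" unfolding k_def by (rule dot_diff)
      ultimately show "\<nu> e0 = 0" using dot_delta[OF e0] by simp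
    qed
    moreover have "last c \<in> E" using postal_E[OF c] c unfolding postal_def by auto
    ultimately have "\<nu> (last c) = 0" by blast
    moreover have "\<mu> c = \<nu> (last c) / z ^ (length c - 1)" using eigenFA_mu_of[OF mu c] \<nu>_def by (simp add: mu_of_def)
    ultimately show "\<mu> c = 0" by simp
  qed
qed

end


theorem mainTheorem17:
  fixes V :: "'v set" and adj :: "'v \<Rightarrow> 'v \<Rightarrow> bool" and z :: complex
  assumes "finite V" and "V \<noteq> {}"
    and "\<And>u v. adj u v \<Longrightarrow> u \<in> V \<and> v \<in> V"
    and "\<And>u v. adj u v \<Longrightarrow> adj v u"
    and "\<And>v. \<not> adj v v"
    and "\<And>u v. u \<in> V \<Longrightarrow> v \<in> V \<Longrightarrow> adj\<^sup>*\<^sup>* u v"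
    and "\<And>v. v \<in> V \<Longrightarrow> card {u. adj v u} \<ge> 2"
    and "z \<noteq> 0"
  shows "pairing_nondegenerate adj z \<longleftrightarrow> (\<forall>k\<ge>1. kerpow adj z 1 = kerpow adj z k)"
proof -
  have finE: "finite (oedges adj)"
    by (rule finite_subset[of _ "V \<times> V"]) (use assms(1,3) in \<open>auto simp: oedges_def\<close>)
  have succ: "\<exists>e'. turn adj e e'" if e: "e \<in> oedges adj" for e
  proof -
    obtain u v where uv: "e = (u, v)" "adj u v" using e unfolding oedges_def by auto
    have vV: "v \<in> V" using assms(3) uv(2) by blast
    have c2: "card {w. adj v w} \<ge> 2" using assms(7)[OF vV] .
    have "\<not> {w. adj v w} \<subseteq> {u}"
    proof
      assume "{w. adj v w} \<subseteq> {u}"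
      then have "card {w. adj v w} \<le> card {u}" by (rule card_mono[rotated]) simp
      then show False using c2 by simp
    qed
    then obtain w where w: "adj v w" "w \<noteq> u" by blast
    have "turn adj (u, v) (v, w)" unfolding turn_def oedges_def using uv w by auto
    then show ?thesis using uv by blast
  qed
  interpret NB adj z by unfold_locales (use finE succ assms(8) in auto)
  show ?thesis by (rule main_NB)
qed

end
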